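(* Let $1<p<\infty$ and $W:\mathbb{M}^{3\times3}\to[0,+\infty]$ satisfy (H1)–(H5) below. Let $\Omega\subset\mathbb{R}^2$ be open and bounded, $\eta>0$, and $G:\overline\Omega\to\mathbb{M}^{3\times2}$ uniformly continuous with $|G^1(x)\wedge G^2(x)|\geq\eta$ for every $x\in\overline\Omega$. Then for every open set $U\subset\Omega$ there exists $\beta=\beta(\eta,\|G\|_{L^\infty})>0$ such that $$\int_U W_0(G(x))\,dx=\inf\Big\{\int_U W(G(x)|\phi(x))\,dx:\ \phi\in C^\infty(\overline\Omega,\mathbb{R}^3),\ \det(G(x)|\phi(x))\geq\tfrac1\beta\text{ for }x\in\overline\Omega,\ \|\phi\|_{L^\infty(\Omega)}\leq\beta\Big\}.$$
   Context: Hypotheses: (H1) $W$ continuous as a $[0,+\infty]$-valued function; (H2) $W(RF)=W(F)$ for $R\in SO(3)$; (H3) $W(F)<\infty$ if $\det F>0$ and $W(F)=+\infty$ if $\det F\leq0$; (H4) $W(F)\geq C_1|F|^p-1/C_1$; (H5) for each $\delta>0$, $W(F)\leq c_\delta(1+|F|^p)$ when $\det F\geq\delta$. $W_0(A):=\inf_{\xi\in\mathbb{R}^3}W(A|\xi)$, where $(A|\xi)$ is the $3\times3$ matrix with columns $A^1,A^2,\xi$; $\wedge$ is the vector product. *)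

theory Defs
  imports "HOL-Analysis.Analysis" "HOL-Analysis.Cross3"
begin

definition augment :: "real^2^3 \<Rightarrow> real^3 \<Rightarrow> real^3^3" where
  "augment A \<xi> = (\<chi> i j. if j = 1 then A $ i $ 1 else if j = 2 then A $ i $ 2 else \<xi> $ i)"

definition col32 :: "real^2^3 \<Rightarrow> 2 \<Rightarrow> real^3" where
  "col32 A k = (\<chi> i. A $ i $ k)"

definition W0 :: "(real^3^3 \<Rightarrow> ennreal) \<Rightarrow> real^2^3 \<Rightarrow> ennreal" where
  "W0 W A = (INF \<xi>. W (augment A \<xi>))"

fun iter_partial :: "2 list \<Rightarrow> (real^2 \<Rightarrow> real^3) \<Rightarrow> real^2 \<Rightarrow> real^3" where
  "iter_partial [] f = f"
| "iter_partial (i # is) f = (\<lambda>x. frechet_derivative (iter_partial is f) (at x) (axis i 1))"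

definition smooth_on :: "(real^2) set \<Rightarrow> (real^2 \<Rightarrow> real^3) \<Rightarrow> bool" where
  "smooth_on S f \<longleftrightarrow> (\<forall>is. iter_partial is f differentiable_on S)"

definition smooth_up_to_boundary :: "(real^2) set \<Rightarrow> (real^2 \<Rightarrow> real^3) \<Rightarrow> bool" where
  "smooth_up_to_boundary \<Omega> f \<longleftrightarrow> (\<exists>V. open V \<and> closure \<Omega> \<subseteq> V \<and> smooth_on V f)"

definition hyp_W :: "real \<Rightarrow> (real^3^3 \<Rightarrow> ennreal) \<Rightarrow> bool" where
  "hyp_W p W \<longleftrightarrow>
     continuous_on UNIV W
   \<and> (\<forall>R F. orthogonal_matrix R \<and> det R = 1 \<longrightarrow> W (R ** F) = W F)
   \<and> (\<forall>F. det F > 0 \<longrightarrow> W F < \<infinity>)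
   \<and> (\<forall>F. det F \<le> 0 \<longrightarrow> W F = \<infinity>)
   \<and> (\<exists>C1>0. \<forall>F. ennreal (C1 * norm F powr p - 1 / C1) \<le> W F)
   \<and> (\<forall>\<delta>>0. \<exists>c. \<forall>F. det F \<ge> \<delta> \<longrightarrow> W F \<le> ennreal (c * (1 + norm F powr p)))"

end

theory Submission imports Defs begin

lemma rpf_deriv:
  fixes p :: "'a::real_normed_vector \<Rightarrow> real"
  assumes "real_polynomial_function p"
  shows "\<exists>D. (\<forall>x. (p has_derivative D x) (at x)) \<and> (\<forall>v. real_polynomial_function (\<lambda>x. D x v))"
  using assms
proof (induction p rule: real_polynomial_function.induct)
  case (linear f)
  then show ?case by (intro exI[of _ "\<lambda>x. f"]) (auto intro: bounded_linear.has_derivative[OF _ has_derivative_ident])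
next
  case (const c)
  then show ?case by (intro exI[of _ "\<lambda>x h. 0"]) auto
next
  case (add f g)
  then obtain Df Dg where f: "\<forall>x. (f has_derivative Df x) (at x)" "\<forall>v. real_polynomial_function (\<lambda>x. Df x v)"
    and g: "\<forall>x. (g has_derivative Dg x) (at x)" "\<forall>v. real_polynomial_function (\<lambda>x. Dg x v)" by blast
  show ?case
    by (intro exI[of _ "\<lambda>x h. Df x h + Dg x h"]) (use f g in \<open>auto intro!: has_derivative_add\<close>)
next
  case (mult f g)
  then obtain Df Dg where f: "\<forall>x. (f has_derivative Df x) (at x)" "\<forall>v. real_polynomial_function (\<lambda>x. Df x v)"
    and g: "\<forall>x. (g has_derivative Dg x) (at x)" "\<forall>v. real_polynomial_function (\<lambda>x. Dg x v)" by blast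
  show ?case
    by (intro exI[of _ "\<lambda>x h. f x * Dg x h + Df x h * g x"]) (use f g mult.hyps in \<open>auto intro!: has_derivative_mult real_polynomial_function.intros(3,4)\<close>)
qed

lemma pf_partial:
  fixes f :: "'a::euclidean_space \<Rightarrow> 'b::euclidean_space"
  assumes "polynomial_function f"
  shows "polynomial_function (\<lambda>x. frechet_derivative f (at x) v)"
  unfolding polynomial_function_iff_Basis_inner
proof
  fix b :: 'b assume b: "b \<in> Basis"
  have "real_polynomial_function (\<lambda>x. f x \<bullet> b)"
    using assms b polynomial_function_iff_Basis_inner by blast
  then obtain D where D: "\<And>x. ((\<lambda>x. f x \<bullet> b) has_derivative D x) (at x)" "\<And>v. real_polynomial_function (\<lambda>x. D x v)"
    using rpf_deriv by blast
  have eq: "frechet_derivative f (at x) v \<bullet> b = D x v" for x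
  proof -
    have "f differentiable (at x)" using assms differentiable_at_polynomial_function by blast
    then have fd: "(f has_derivative frechet_derivative f (at x)) (at x)"
      using frechet_derivative_works by blast
    have "((\<lambda>x. f x \<bullet> b) has_derivative (\<lambda>h. frechet_derivative f (at x) h \<bullet> b)) (at x)"
      using has_derivative_inner_left[OF fd] by simp
    then have "(\<lambda>h. frechet_derivative f (at x) h \<bullet> b) = D x"
      using D(1) has_derivative_unique by blast
    then show ?thesis by metis
  qed
  show "real_polynomial_function (\<lambda>x. frechet_derivative f (at x) v \<bullet> b)"
    unfolding eq using D(2) .
qed

lemma pf_iter_partial:
  assumes "polynomial_function g"
  shows "polynomial_function (iter_partial is g)"
  by (induction "is") (use assms in \<open>auto intro: pf_partial\<close>)

lemma pf_smooth:
  assumes "polynomial_function g"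
  shows "smooth_up_to_boundary \<Omega> g"
  unfolding smooth_up_to_boundary_def smooth_on_def
  by (intro exI[of _ UNIV]) (auto intro!: differentiable_on_polynomial_function pf_iter_partial assms)


lemma norm_aug_sq: "(norm (augment A \<xi>))\<^sup>2 = (norm A)\<^sup>2 + (norm \<xi>)\<^sup>2"
  by (simp add: power2_norm_eq_inner inner_vec_def sum_3 sum_2 augment_def)

lemma norm_aug_ge: "norm \<xi> \<le> norm (augment A \<xi>)"
  using norm_aug_sq[of A \<xi>] by (metis le_add_same_cancel2 norm_ge_zero power2_le_imp_le zero_le_power2)

lemma norm_aug_le: "norm (augment A \<xi>) \<le> norm A + norm \<xi>"
proof -
  have "(norm (augment A \<xi>))\<^sup>2 \<le> (norm A + norm \<xi>)\<^sup>2"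
    unfolding norm_aug_sq by (simp add: power2_sum)
  then show ?thesis using power2_le_imp_le by (metis add_nonneg_nonneg norm_ge_zero)
qed

lemma cont_aug: "continuous_on UNIV (\<lambda>z::(real^2^3) \<times> (real^3). augment (fst z) (snd z))"
  unfolding augment_def
  apply (intro continuous_on_vec_lambda)
  subgoal for i j by (cases "j = 1"; cases "j = 2"; simp; intro continuous_intros)
  done

definition nc :: "real^2^3 \<Rightarrow> real^3" where
  "nc A = cross3 (col32 A 1) (col32 A 2)"

lemma det_aug: "det (augment A \<xi>) = \<xi> \<bullet> nc A"
  by (simp add: nc_def det_3 cross3_def inner_vec_def sum_3 augment_def col32_def algebra_simps)

lemma cont_nc: "continuous_on UNIV nc"
  unfolding nc_def col32_def
  by (intro continuous_on_cross continuous_on_vec_lambda continuous_intros)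

lemma norm_col32: "norm (col32 A k) \<le> norm A"
proof -
  have "(norm (col32 A k))\<^sup>2 = (\<Sum>i\<in>UNIV. (A$i$k)\<^sup>2)"
    unfolding power2_norm_eq_inner inner_vec_def col32_def by (simp add: power2_eq_square)
  also have "\<dots> \<le> (\<Sum>i\<in>UNIV. (norm (A$i))\<^sup>2)"
  proof (rule sum_mono)
    fix i
    have "\<bar>A$i$k\<bar> \<le> norm (A$i)" by (rule component_le_norm_cart)
    then show "(A$i$k)\<^sup>2 \<le> (norm (A$i))\<^sup>2"
      by (metis abs_ge_zero power2_abs power_mono)
  qed
  also have "\<dots> = (norm A)\<^sup>2"
    by (simp add: power2_norm_eq_inner inner_vec_def)
  finally show ?thesis using power2_le_imp_le norm_ge_zero by blast
qed

lemma norm_cross_le: "norm (cross3 x y) \<le> norm x * norm y"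
proof -
  have "(norm (cross3 x y))\<^sup>2 \<le> (norm x * norm y)\<^sup>2"
    using norm_cross_dot[of x y] by (metis le_add_same_cancel1 zero_le_power2)
  then show ?thesis using power2_le_imp_le by (metis mult_nonneg_nonneg norm_ge_zero)
qed

lemma norm_nc: "norm (nc A) \<le> (norm A)\<^sup>2"
proof -
  have "norm (nc A) \<le> norm (col32 A 1) * norm (col32 A 2)" unfolding nc_def by (rule norm_cross_le)
  also have "\<dots> \<le> norm A * norm A" by (intro mult_mono norm_col32) auto
  finally show ?thesis by (simp add: power2_eq_square)
qed

lemma pos_fun:
  fixes Op :: "'a::euclidean_space set"
  assumes "open Op"
  shows "\<exists>w::'a \<Rightarrow> real. continuous_on UNIV w \<and> (\<forall>x. w x \<ge> 0) \<and> (\<forall>x. w x > 0 \<longleftrightarrow> x \<in> Op)"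
proof (cases "Op = UNIV")
  case True
  show ?thesis by (intro exI[of _ "\<lambda>x. 1::real"]) (auto simp: True continuous_on_const)
next
  case False
  have cl: "closed (- Op)" using assms by auto
  have ne: "- Op \<noteq> {}" using False by auto
  show ?thesis
  proof (intro exI[of _ "\<lambda>x. setdist {x} (- Op)"] conjI allI)
    show "continuous_on UNIV (\<lambda>x. setdist {x} (- Op))" by (rule continuous_on_setdist)
    fix x
    show "setdist {x} (- Op) \<ge> 0" by (rule setdist_pos_le)
    show "setdist {x} (- Op) > 0 \<longleftrightarrow> x \<in> Op"
      using setdist_eq_0_closed[OF cl, of x] ne setdist_pos_le[of "{x}" "- Op"]
      by (auto simp: less_le)
  qed
qed

lemma conv_norm:
  fixes v :: "'i \<Rightarrow> 'a::real_normed_vector"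
  assumes "\<forall>i\<in>I. w i \<ge> 0" "\<forall>i\<in>I. w i > 0 \<longrightarrow> norm (v i) \<le> R"
  shows "norm (\<Sum>i\<in>I. w i *\<^sub>R v i) \<le> R * (\<Sum>i\<in>I. w i)"
proof -
  have "norm (\<Sum>i\<in>I. w i *\<^sub>R v i) \<le> (\<Sum>i\<in>I. norm (w i *\<^sub>R v i))" by (rule norm_sum)
  also have "\<dots> \<le> (\<Sum>i\<in>I. R * w i)"
  proof (rule sum_mono)
    fix i assume i: "i \<in> I"
    show "norm (w i *\<^sub>R v i) \<le> R * w i"
    proof (cases "w i > 0")
      case True
      then show ?thesis using assms i by (simp add: mult.commute mult_left_mono)
    next
      case False
      then have "w i = 0" using assms i by force
      then show ?thesis by simp
    qed
  qed
  finally show ?thesis by (simp add: sum_distrib_left)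
qed

lemma conv_inner:
  fixes v :: "'i \<Rightarrow> 'a::real_inner"
  assumes "\<forall>i\<in>I. w i \<ge> 0" "\<forall>i\<in>I. w i > 0 \<longrightarrow> d \<le> v i \<bullet> n"
  shows "d * (\<Sum>i\<in>I. w i) \<le> (\<Sum>i\<in>I. w i *\<^sub>R v i) \<bullet> n"
proof -
  have "d * (\<Sum>i\<in>I. w i) = (\<Sum>i\<in>I. w i * d)" by (simp add: sum_distrib_left mult.commute)
  also have "\<dots> \<le> (\<Sum>i\<in>I. w i * (v i \<bullet> n))"
  proof (rule sum_mono)
    fix i assume i: "i \<in> I"
    show "w i * d \<le> w i * (v i \<bullet> n)"
    proof (cases "w i > 0")
      case True
      then show ?thesis using assms i by (simp add: mult_left_mono)
    next
      case False
      then have "w i = 0" using assms i by force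
      then show ?thesis by simp
    qed
  qed
  also have "\<dots> = (\<Sum>i\<in>I. w i *\<^sub>R v i) \<bullet> n" by (simp add: inner_sum_left)
  finally show ?thesis .
qed

lemma ennreal_less_add_eps:
  assumes "a < top" "e > 0"
  shows "a < a + ennreal e"
  using assms by (cases a) (auto simp flip: ennreal_plus intro!: ennreal_lessI)

context
  fixes W :: "real^3^3 \<Rightarrow> ennreal" and p C1 :: real
  assumes Wcont: "continuous_on UNIV W"
    and C1: "C1 > 0" "\<And>F. ennreal (C1 * norm F powr p - 1/C1) \<le> W F"
    and p: "p > 1"
    and Wfin: "\<And>F. det F > 0 \<Longrightarrow> W F < \<infinity>"
    and Winf: "\<And>F. det F \<le> 0 \<Longrightarrow> W F = \<infinity>"
    and H5: "\<And>\<delta>. \<delta> > 0 \<Longrightarrow> \<exists>c. \<forall>F. det F \<ge> \<delta> \<longrightarrow> W F \<le> ennreal (c * (1 + norm F powr p))"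
begin

lemma coerc:
  assumes "W (augment A \<xi>) \<le> ennreal L" "L \<ge> 0"
  shows "norm \<xi> \<le> max 1 ((L + 1/C1)/C1)"
proof -
  let ?F = "augment A \<xi>"
  have "ennreal (C1 * norm ?F powr p - 1/C1) \<le> ennreal L" using C1(2) assms(1) order_trans by blast
  then have "C1 * norm ?F powr p - 1/C1 \<le> L" using assms(2) by (simp add: ennreal_le_iff)
  then have "norm ?F powr p \<le> (L + 1/C1)/C1" using C1(1) by (simp add: field_simps)
  moreover have "norm ?F \<le> norm ?F powr p" if "norm ?F \<ge> 1"
    using that p by (metis less_imp_le powr_mono powr_one_gt_zero_iff norm_ge_zero order.strict_trans1 zero_less_one powr_one)
  ultimately have "norm ?F \<le> max 1 ((L + 1/C1)/C1)" by force
  then show ?thesis using norm_aug_ge order_trans by blast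
qed

lemma Waug_cont: "continuous_on UNIV (\<lambda>z::(real^2^3) \<times> (real^3). W (augment (fst z) (snd z)))"
  using continuous_on_compose2[OF Wcont cont_aug] by simp

lemma lsc:
  assumes "W0 W A0 \<le> ennreal L" "L \<ge> 0" "a < W0 W A0"
  shows "\<exists>X. open X \<and> A0 \<in> X \<and> (\<forall>A\<in>X. a < W0 W A)"
proof -
  obtain a' where a': "a < a'" "a' < W0 W A0" using dense assms(3) by blast
  define R where "R = max 1 ((L + 1 + 1/C1)/C1)"
  have big: "ennreal (L+1) < W (augment A \<xi>)" if "norm \<xi> > R" for A \<xi>
    using coerc[of A \<xi> "L+1"] that assms(2) unfolding R_def by force
  have a'L: "a' < ennreal (L+1)"
  proof -
    have "ennreal L < ennreal (L+1)" using assms(2) by (intro ennreal_lessI) auto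
    moreover have "a' < ennreal L" using a'(2) assms(1) by (rule order.strict_trans2)
    ultimately show ?thesis by (rule order.strict_trans[rotated])
  qed
  define Ws where "Ws = {z::(real^2^3) \<times> (real^3). a' < W (augment (fst z) (snd z))}"
  have opWs: "open Ws" unfolding Ws_def
    by (rule open_Collect_less[OF continuous_on_const Waug_cont])
  have subWs: "{A0} \<times> cball (0::real^3) R \<subseteq> Ws"
  proof
    fix z :: "(real^2^3) \<times> (real^3)" assume "z \<in> {A0} \<times> cball (0::real^3) R"
    then obtain \<xi> where z: "z = (A0, \<xi>)" by auto
    have "W0 W A0 \<le> W (augment A0 \<xi>)" unfolding W0_def by (rule INF_lower) simp
    with a'(2) have "a' < W (augment A0 \<xi>)" by (rule order.strict_trans2)
    then show "z \<in> Ws" unfolding Ws_def z by simp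
  qed
  from Elementary_Topology.tube_lemma[OF compact_cball opWs subWs] obtain X where X: "A0 \<in> X" "open X" "X \<times> cball (0::real^3) R \<subseteq> Ws"
    by blast
  have "a < W0 W A" if "A \<in> X" for A
  proof -
    have "a' \<le> W (augment A \<xi>)" for \<xi>
    proof (cases "norm \<xi> \<le> R")
      case True
      then have "(A, \<xi>) \<in> Ws" using X(3) that by auto
      then show ?thesis unfolding Ws_def by simp
    next
      case False
      then have "ennreal (L+1) < W (augment A \<xi>)" using big[of \<xi> A] by simp
      with a'L show ?thesis by simp
    qed
    then have "a' \<le> W0 W A" unfolding W0_def by (rule INF_greatest)
    then show ?thesis using a'(1) by simp
  qed
  then show ?thesis using X by blast
qed

lemma W_bound:
  assumes "\<delta> > 0" "B \<ge> 0"
  shows "\<exists>L\<ge>0. \<forall>F. det F \<ge> \<delta> \<longrightarrow> norm F \<le> B \<longrightarrow> W F \<le> ennreal L"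
proof -
  obtain c where c: "\<forall>F. det F \<ge> \<delta> \<longrightarrow> W F \<le> ennreal (c * (1 + norm F powr p))"
    using H5[OF assms(1)] by blast
  define L where "L = max 0 c * (1 + B powr p)"
  have "W F \<le> ennreal L" if "det F \<ge> \<delta>" "norm F \<le> B" for F
  proof -
    have "norm F powr p \<le> B powr p" using that(2) p by (intro powr_mono2) auto
    then have "c * (1 + norm F powr p) \<le> L" unfolding L_def
      by (intro order_trans[OF mult_right_mono[of c "max 0 c"]] mult_left_mono) auto
    then show ?thesis using c that(1) by (meson ennreal_leI order_trans)
  qed
  moreover have "L \<ge> 0" unfolding L_def by auto
  ultimately show ?thesis by blast
qed

lemma W0_bound:
  assumes "\<eta> > 0"
  shows "\<exists>L\<ge>0. \<forall>A. norm A \<le> M \<longrightarrow> \<eta> \<le> norm (nc A) \<longrightarrow> W0 W A \<le> ennreal L"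
proof -
  obtain L where L: "L \<ge> 0" "\<forall>F. det F \<ge> \<eta> \<longrightarrow> norm F \<le> max 0 M + 1 \<longrightarrow> W F \<le> ennreal L"
    using W_bound[OF assms, of "max 0 M + 1"] by auto
  have "W0 W A \<le> ennreal L" if "norm A \<le> M" "\<eta> \<le> norm (nc A)" for A
  proof -
    define \<xi> where "\<xi> = (1 / norm (nc A)) *\<^sub>R nc A"
    have nz: "norm (nc A) > 0" using that assms by linarith
    have "det (augment A \<xi>) = norm (nc A)"
      unfolding det_aug \<xi>_def using nz by (simp add: inner_commute power2_norm_eq_inner[symmetric] power2_eq_square)
    then have d: "det (augment A \<xi>) \<ge> \<eta>" using that by simp
    have "norm \<xi> = 1" unfolding \<xi>_def using nz by simp
    then have "norm (augment A \<xi>) \<le> max 0 M + 1" using norm_aug_le[of A \<xi>] that(1) by linarith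
    then have "W (augment A \<xi>) \<le> ennreal L" using L d by blast
    moreover have "W0 W A \<le> W (augment A \<xi>)" unfolding W0_def by (rule INF_lower) simp
    ultimately show ?thesis by (rule order_trans[rotated])
  qed
  then show ?thesis using L by blast
qed

lemma delta_exists:
  assumes "L \<ge> 0"
  shows "\<exists>\<delta>>0. \<forall>A \<xi>. norm A \<le> M \<longrightarrow> norm \<xi> \<le> R \<longrightarrow> W (augment A \<xi>) \<le> ennreal L \<longrightarrow> \<delta> \<le> \<xi> \<bullet> nc A"
proof -
  define T where "T = (cball (0::real^2^3) M \<times> cball (0::real^3) R) \<inter> {z. W (augment (fst z) (snd z)) \<le> ennreal L}"
  have cT: "compact T" unfolding T_def
    by (intro compact_Int_closed compact_Times compact_cball closed_Collect_le Waug_cont continuous_on_const)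
  show ?thesis
  proof (cases "T = {}")
    case True
    then show ?thesis unfolding T_def by (intro exI[of _ 1]) force
  next
    case False
    have "continuous_on T (\<lambda>z. snd z \<bullet> nc (fst z))"
      by (intro continuous_intros continuous_on_compose2[OF cont_nc]) auto
    then obtain z0 where z0: "z0 \<in> T" "\<forall>y\<in>T. snd z0 \<bullet> nc (fst z0) \<le> snd y \<bullet> nc (fst y)"
      using continuous_attains_inf[OF cT False] by blast
    have "W (augment (fst z0) (snd z0)) \<le> ennreal L" using z0(1) unfolding T_def by auto
    then have "W (augment (fst z0) (snd z0)) < \<infinity>" using ennreal_less_top[of L] unfolding infinity_ennreal_def by (rule order.strict_trans1)
    then have "W (augment (fst z0) (snd z0)) \<noteq> \<infinity>" by simp
    then have pos: "snd z0 \<bullet> nc (fst z0) > 0" using Winf[of "augment (fst z0) (snd z0)"] unfolding det_aug by force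
    show ?thesis
    proof (intro exI[of _ "snd z0 \<bullet> nc (fst z0)"] conjI allI impI pos)
      fix A \<xi> assume "norm A \<le> M" "norm \<xi> \<le> R" "W (augment A \<xi>) \<le> ennreal L"
      then have "(A, \<xi>) \<in> T" unfolding T_def by auto
      then show "snd z0 \<bullet> nc (fst z0) \<le> \<xi> \<bullet> nc A" using z0(2) by force
    qed
  qed
qed

lemma W0_cont:
  "continuous_on {A. W0 W A \<le> ennreal L} (W0 W)"
  unfolding continuous_on_def
proof
  fix A0 assume A0: "A0 \<in> {A. W0 W A \<le> ennreal L}"
  show "(W0 W \<longlongrightarrow> W0 W A0) (at A0 within {A. W0 W A \<le> ennreal L})"
  proof (rule order_tendstoI)
    fix a assume "a < W0 W A0"
    then obtain X where "open X" "A0 \<in> X" "\<forall>A\<in>X. a < W0 W A"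
      using lsc[of A0 "max 0 L" a] A0 by (smt (verit, ccfv_SIG) ennreal_max_0 max.cobounded2 max_def mem_Collect_eq)
    then show "\<forall>\<^sub>F x in at A0 within {A. W0 W A \<le> ennreal L}. a < W0 W x"
      unfolding eventually_at_topological by blast
  next
    fix a assume "W0 W A0 < a"
    then obtain \<xi> where \<xi>: "W (augment A0 \<xi>) < a" unfolding W0_def by (auto simp: INF_less_iff)
    define X where "X = {A. W (augment A \<xi>) < a}"
    have "continuous_on UNIV (\<lambda>A::real^2^3. (A, \<xi>))" by (intro continuous_intros)
    then have "continuous_on UNIV (\<lambda>A. W (augment A \<xi>))"
      using continuous_on_compose2[OF Waug_cont] by fastforce
    then have "open X" unfolding X_def by (rule open_Collect_less[OF _ continuous_on_const])
    moreover have "\<forall>A\<in>X. W0 W A < a"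
    proof
      fix A assume "A \<in> X"
      have "W0 W A \<le> W (augment A \<xi>)" unfolding W0_def by (rule INF_lower) simp
      with \<open>A \<in> X\<close> show "W0 W A < a" unfolding X_def by simp
    qed
    ultimately show "\<forall>\<^sub>F x in at A0 within {A. W0 W A \<le> ennreal L}. W0 W x < a"
      unfolding eventually_at_topological using \<xi> X_def by blast
  qed
qed


lemma WA_cont: "continuous_on UNIV (\<lambda>A. W (augment A \<xi>))"
proof -
  have "continuous_on UNIV (\<lambda>A::real^2^3. (A, \<xi>))" by (intro continuous_intros)
  then show ?thesis using continuous_on_compose2[OF Waug_cont] by fastforce
qed

lemma approx:
  fixes G :: "real^2 \<Rightarrow> real^2^3" and K :: "(real^2) set"
  assumes K: "compact K" and Gc: "continuous_on K G"
    and L0: "L0 \<ge> 0" "\<forall>x\<in>K. W0 W (G x) \<le> ennreal L0"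
    and RD: "\<delta> > 0" "\<forall>x\<in>K. \<forall>\<xi>. W (augment (G x) \<xi>) \<le> ennreal (L0+1) \<longrightarrow> norm \<xi> \<le> R \<and> \<delta> \<le> \<xi> \<bullet> nc (G x)"
    and e1: "0 < \<epsilon>1" "\<epsilon>1 \<le> 1" and e2: "\<epsilon>2 > 0"
  shows "\<exists>\<phi>0 Bad. continuous_on K \<phi>0 \<and> Bad \<in> sets borel \<and> emeasure lborel Bad \<le> ennreal \<epsilon>2
     \<and> (\<forall>x\<in>K. norm (\<phi>0 x) \<le> R \<and> \<delta>/2 \<le> \<phi>0 x \<bullet> nc (G x))
     \<and> (\<forall>x\<in>K - Bad. W (augment (G x) (\<phi>0 x)) \<le> W0 W (G x) + ennreal (3*\<epsilon>1))"
proof (cases "K = {}")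
  case True
  then show ?thesis by (intro exI[of _ "\<lambda>x. 0"] exI[of _ "{}"]) auto
next
  case Kne: False
  have e1': "0 \<le> \<epsilon>1" using e1 by simp
  have e3: "ennreal (3*\<epsilon>1) = ennreal \<epsilon>1 + ennreal \<epsilon>1 + ennreal \<epsilon>1"
    using e1' by (simp flip: ennreal_plus)
  have stepa: "\<forall>x\<in>K. \<exists>\<xi>N. open (snd \<xi>N) \<and> x \<in> snd \<xi>N \<and> norm (fst \<xi>N) \<le> R \<and>
      (\<forall>y\<in>snd \<xi>N \<inter> K. \<delta>/2 < fst \<xi>N \<bullet> nc (G y) \<and> W (augment (G y) (fst \<xi>N)) \<le> W0 W (G y) + ennreal (3*\<epsilon>1))"
  proof
    fix x assume x: "x \<in> K"
    define A0 where "A0 = G x"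
    have A0L: "W0 W A0 \<le> ennreal L0" using L0 x unfolding A0_def by blast
    have fin: "W0 W A0 < top" using A0L ennreal_less_top by (rule order.strict_trans1)
    have "W0 W A0 < W0 W A0 + ennreal \<epsilon>1" by (rule ennreal_less_add_eps[OF fin e1(1)])
    then obtain \<xi> where \<xi>: "W (augment A0 \<xi>) < W0 W A0 + ennreal \<epsilon>1"
      unfolding W0_def by (auto simp: INF_less_iff)
    have "W0 W A0 + ennreal \<epsilon>1 \<le> ennreal L0 + ennreal 1" using A0L e1 by (intro add_mono) auto
    also have "\<dots> = ennreal (L0+1)" using ennreal_plus[of L0 1] L0(1) by simp
    finally have "W (augment A0 \<xi>) \<le> ennreal (L0+1)" using \<xi> by simp
    then have nx: "norm \<xi> \<le> R" "\<delta> \<le> \<xi> \<bullet> nc A0" using RD(2) x unfolding A0_def by auto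
    have fin2: "W0 W A0 + ennreal \<epsilon>1 < top" using fin by simp
    have finW: "W (augment A0 \<xi>) < top" using \<xi> fin2 by (rule order.strict_trans)
    define X1 where "X1 = {A. W (augment A \<xi>) < W (augment A0 \<xi>) + ennreal \<epsilon>1}"
    have oX1: "open X1" unfolding X1_def by (rule open_Collect_less[OF WA_cont continuous_on_const])
    have A0X1: "A0 \<in> X1" unfolding X1_def using ennreal_less_add_eps[OF finW e1(1)] by simp
    define X2 where "X2 = {A. \<delta>/2 < \<xi> \<bullet> nc A}"
    have "continuous_on UNIV (\<lambda>A. \<xi> \<bullet> nc A)" by (intro continuous_on_inner continuous_on_const cont_nc)
    then have oX2: "open X2" unfolding X2_def by (rule open_Collect_less[OF continuous_on_const])
    have A0X2: "A0 \<in> X2" unfolding X2_def using nx RD(1) by simp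
    obtain X3 where X3: "open X3" "A0 \<in> X3" "\<forall>A\<in>X3. W0 W A0 \<le> W0 W A + ennreal \<epsilon>1"
    proof (cases "W0 W A0 \<le> ennreal \<epsilon>1")
      case True
      show ?thesis by (rule that[of UNIV]) (use True in \<open>auto intro: add_increasing\<close>)
    next
      case False
      obtain w where w: "W0 W A0 = ennreal w" "w \<ge> 0" using fin by (cases "W0 W A0") auto
      have wgt: "\<epsilon>1 < w" using False w by (metis ennreal_leI not_le_imp_less)
      have "ennreal (w - \<epsilon>1) < W0 W A0" unfolding w(1) using wgt e1 by (intro ennreal_lessI) auto
      then obtain X where X: "open X" "A0 \<in> X" "\<forall>A\<in>X. ennreal (w - \<epsilon>1) < W0 W A"
        using lsc[OF A0L L0(1)] by blast
      show ?thesis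
      proof (rule that[OF X(1,2)], intro ballI)
        fix A assume "A \<in> X"
        then have "ennreal (w - \<epsilon>1) + ennreal \<epsilon>1 \<le> W0 W A + ennreal \<epsilon>1"
          using X(3) by (intro add_right_mono) (auto intro: less_imp_le)
        moreover have "ennreal (w - \<epsilon>1) + ennreal \<epsilon>1 = W0 W A0"
          unfolding w(1) using wgt e1 by (simp flip: ennreal_plus)
        ultimately show "W0 W A0 \<le> W0 W A + ennreal \<epsilon>1" by simp
      qed
    qed
    define Ob where "Ob = X1 \<inter> X2 \<inter> X3"
    have "open Ob" unfolding Ob_def using oX1 oX2 X3(1) by auto
    then obtain N where N: "open N" "N \<inter> K = G -` Ob \<inter> K"
      using Gc unfolding continuous_on_open_invariant by blast
    have xN: "x \<in> N" using N(2) x A0X1 A0X2 X3(2) unfolding Ob_def A0_def by blast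
    have good: "\<delta>/2 < \<xi> \<bullet> nc (G y) \<and> W (augment (G y) \<xi>) \<le> W0 W (G y) + ennreal (3*\<epsilon>1)"
      if y: "y \<in> N \<inter> K" for y
    proof
      have Gy: "G y \<in> Ob" using N(2) y by blast
      then show "\<delta>/2 < \<xi> \<bullet> nc (G y)" unfolding Ob_def X2_def by simp
      have "W (augment (G y) \<xi>) \<le> W (augment A0 \<xi>) + ennreal \<epsilon>1"
        using Gy unfolding Ob_def X1_def by (auto intro: less_imp_le)
      also have "\<dots> \<le> (W0 W A0 + ennreal \<epsilon>1) + ennreal \<epsilon>1"
        using \<xi> by (intro add_right_mono) (auto intro: less_imp_le)
      also have "\<dots> \<le> ((W0 W (G y) + ennreal \<epsilon>1) + ennreal \<epsilon>1) + ennreal \<epsilon>1"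
        using Gy X3(3) unfolding Ob_def by (intro add_right_mono) auto
      also have "\<dots> = W0 W (G y) + ennreal (3*\<epsilon>1)" unfolding e3 by (simp add: ac_simps)
      finally show "W (augment (G y) \<xi>) \<le> W0 W (G y) + ennreal (3*\<epsilon>1)" .
    qed
    show "\<exists>\<xi>N. open (snd \<xi>N) \<and> x \<in> snd \<xi>N \<and> norm (fst \<xi>N) \<le> R \<and>
      (\<forall>y\<in>snd \<xi>N \<inter> K. \<delta>/2 < fst \<xi>N \<bullet> nc (G y) \<and> W (augment (G y) (fst \<xi>N)) \<le> W0 W (G y) + ennreal (3*\<epsilon>1))"
      by (rule exI[of _ "(\<xi>, N)"]) (use N(1) xN nx(1) good in auto)
  qed
  obtain f where f: "\<forall>x\<in>K. open (snd (f x)) \<and> x \<in> snd (f x) \<and> norm (fst (f x)) \<le> R \<and>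
      (\<forall>y\<in>snd (f x) \<inter> K. \<delta>/2 < fst (f x) \<bullet> nc (G y) \<and> W (augment (G y) (fst (f x))) \<le> W0 W (G y) + ennreal (3*\<epsilon>1))"
    using bchoice[OF stepa] by blast
  define Nf where "Nf x = snd (f x)" for x
  obtain T where T: "T \<subseteq> K" "finite T" "K \<subseteq> (\<Union>x\<in>T. Nf x)"
  proof (rule compactE_image[OF K, of K Nf])
    show "\<And>x. x \<in> K \<Longrightarrow> open (Nf x)" using f unfolding Nf_def by blast
    show "K \<subseteq> (\<Union>x\<in>K. Nf x)" using f unfolding Nf_def by blast
  qed blast
  define m where "m = card T"
  obtain h where h: "bij_betw h {0..<m} T" using ex_bij_betw_nat_finite[OF T(2)] m_def by blast
  have hT: "h ` {..<m} = T" using h by (simp add: bij_betw_def lessThan_atLeast0)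
  define xi where "xi i = fst (f (h i))" for i
  define N where "N i = Nf (h i)" for i
  have hK: "h i \<in> K" if "i < m" for i using hT T(1) that by blast
  have Nopen: "open (N i)" if "i < m" for i using f hK[OF that] unfolding N_def Nf_def by blast
  have xiR: "norm (xi i) \<le> R" if "i < m" for i using f hK[OF that] unfolding xi_def by blast
  have Ngood: "\<delta>/2 < xi i \<bullet> nc (G y) \<and> W (augment (G y) (xi i)) \<le> W0 W (G y) + ennreal (3*\<epsilon>1)"
    if "i < m" "y \<in> N i" "y \<in> K" for i y
    using f hK[OF that(1)] that(2,3) unfolding xi_def N_def Nf_def by blast
  have cover: "\<exists>i<m. x \<in> N i" if xK: "x \<in> K" for x
  proof -
    obtain t where "t \<in> T" "x \<in> Nf t" using T(3) xK by blast
    then obtain i where "i < m" "h i = t" using hT by blast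
    then show ?thesis using \<open>x \<in> Nf t\<close> unfolding N_def by blast
  qed
  have mpos: "m > 0" using cover Kne by fastforce
  define P where "P i = K \<inter> N i - (\<Union>j<i. N j)" for i
  have Kcl: "closed K" using K by (rule compact_imp_closed)
  have Pborel: "P i \<in> sets borel" if "i < m" for i
    unfolding P_def using Kcl Nopen that by (intro sets.Diff sets.Int sets.finite_UN) auto
  have "\<forall>i\<in>{..<m}. \<exists>C. closed C \<and> C \<subseteq> P i \<and> emeasure lebesgue (P i - C) < ennreal (\<epsilon>2 / m)"
  proof
    fix i assume "i \<in> {..<m}"
    then have "P i \<in> sets lebesgue" using Pborel sets_completionI_sets sets_lborel by (metis lessThan_iff)
    moreover have "\<epsilon>2 / m > 0" using e2 mpos by simp
    ultimately obtain C where "closed C" "C \<subseteq> P i" "emeasure lebesgue (P i - C) < ennreal (\<epsilon>2 / m)"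
      using sets_lebesgue_inner_closed by metis
    then show "\<exists>C. closed C \<and> C \<subseteq> P i \<and> emeasure lebesgue (P i - C) < ennreal (\<epsilon>2 / m)" by blast
  qed
  from bchoice[OF this] obtain C where C: "\<forall>i\<in>{..<m}. closed (C i) \<and> C i \<subseteq> P i \<and> emeasure lebesgue (P i - C i) < ennreal (\<epsilon>2 / m)"
    by blast
  define Bad where "Bad = K - (\<Union>i<m. C i)"
  have Bad_borel: "Bad \<in> sets borel"
    unfolding Bad_def using Kcl C by (intro sets.Diff sets.finite_UN) auto
  have Bad_sub: "Bad \<subseteq> (\<Union>i<m. P i - C i)"
  proof
    fix x assume x: "x \<in> Bad"
    then have xK: "x \<in> K" and xC: "\<forall>i<m. x \<notin> C i" unfolding Bad_def by auto
    define i0 where "i0 = (LEAST i. i < m \<and> x \<in> N i)"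
    have i0: "i0 < m" "x \<in> N i0" using LeastI_ex[OF cover[OF xK]] unfolding i0_def by auto
    have "x \<notin> N j" if "j < i0" for j
      using not_less_Least[of j "\<lambda>i. i < m \<and> x \<in> N i"] that i0(1) unfolding i0_def by auto
    then have "x \<in> P i0" unfolding P_def using xK i0 by auto
    then show "x \<in> (\<Union>i<m. P i - C i)" using i0(1) xC by blast
  qed
  have Bad_meas: "emeasure lborel Bad \<le> ennreal \<epsilon>2"
  proof -
    have sets: "(\<lambda>i. P i - C i) ` {..<m} \<subseteq> sets lebesgue"
      using Pborel C sets_completionI_sets sets_lborel by (auto intro!: sets.Diff)
    have "emeasure lborel Bad = emeasure lebesgue Bad" using Bad_borel by simp
    also have "\<dots> \<le> emeasure lebesgue (\<Union>i<m. P i - C i)"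
      using Bad_sub sets by (intro emeasure_mono) auto
    also have "\<dots> \<le> (\<Sum>i<m. emeasure lebesgue (P i - C i))"
      using sets by (intro emeasure_subadditive_finite) auto
    also have "\<dots> \<le> (\<Sum>i<m. ennreal (\<epsilon>2 / m))"
      using C by (intro sum_mono) (auto intro: less_imp_le)
    also have "\<dots> = ennreal (\<Sum>i<m. \<epsilon>2 / m)" using e2 by (intro sum_ennreal) auto
    also have "(\<Sum>i<m. \<epsilon>2 / m) = \<epsilon>2" using mpos by simp
    finally show ?thesis .
  qed
  have CP: "C i \<subseteq> K \<inter> N i" if "i < m" for i using C that unfolding P_def by auto
  have disj: "C i \<inter> C j = {}" if "i < m" "j < m" "i \<noteq> j" for i j
  proof -
    have *: "C a \<inter> C b = {}" if "a < b" "b < m" for a b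
    proof -
      have "C b \<subseteq> - N a" using C that unfolding P_def by auto
      moreover have "C a \<subseteq> N a" using CP that by auto
      ultimately show ?thesis by auto
    qed
    show ?thesis using *[of i j] *[of j i] that by (cases "i < j") auto
  qed
  define Op where "Op i = N i - (\<Union>j\<in>{..<m} - {i}. C j)" for i
  have Op_open: "open (Op i)" if "i < m" for i
    unfolding Op_def using Nopen[OF that] C by (intro open_Diff closed_UN) auto
  have "\<forall>i\<in>{..<m}. \<exists>w::real^2 \<Rightarrow> real. continuous_on UNIV w \<and> (\<forall>x. w x \<ge> 0) \<and> (\<forall>x. w x > 0 \<longleftrightarrow> x \<in> Op i)"
    using pos_fun Op_open by blast
  from bchoice[OF this] obtain w :: "nat \<Rightarrow> real^2 \<Rightarrow> real" where w: "\<forall>i\<in>{..<m}. continuous_on UNIV (w i) \<and> (\<forall>x. w i x \<ge> 0) \<and> (\<forall>x. w i x > 0 \<longleftrightarrow> x \<in> Op i)"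
    by blast
  have wnn: "\<forall>i\<in>{..<m}. w i x \<ge> 0" for x using w by blast
  define S where "S x = (\<Sum>i<m. w i x)" for x
  define \<phi>0 where "\<phi>0 x = (1 / S x) *\<^sub>R (\<Sum>i<m. w i x *\<^sub>R xi i)" for x
  have act: "x \<in> N i" if "i < m" "w i x > 0" for i x
    using w that unfolding Op_def by auto
  have inC: "w k x > 0 \<and> (\<forall>j<m. j \<noteq> k \<longrightarrow> w j x = 0)" if "x \<in> C k" "k < m" for x k
  proof
    have "x \<notin> C j" if "j < m" "j \<noteq> k" for j using disj[of k j] that \<open>x \<in> C k\<close> \<open>k < m\<close> by auto
    then have "x \<in> Op k" unfolding Op_def using CP[OF \<open>k < m\<close>] \<open>x \<in> C k\<close> by auto
    then show "w k x > 0" using w \<open>k < m\<close> by blast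
    show "\<forall>j<m. j \<noteq> k \<longrightarrow> w j x = 0"
    proof (intro allI impI)
      fix j assume "j < m" "j \<noteq> k"
      then have "x \<notin> Op j" unfolding Op_def using that by auto
      then show "w j x = 0" using w \<open>j < m\<close> by (metis lessThan_iff order_less_le)
    qed
  qed
  have Spos: "S x > 0" if x: "x \<in> K" for x
  proof -
    obtain i where i: "i < m" "w i x > 0"
    proof (cases "\<exists>k<m. x \<in> C k")
      case True
      then show ?thesis using inC that by blast
    next
      case False
      obtain i where "i < m" "x \<in> N i" using cover[OF x] by blast
      then have "x \<in> Op i" using False unfolding Op_def by auto
      then show ?thesis using that w \<open>i < m\<close> by blast
    qed
    have "w i x \<le> S x" unfolding S_def using i wnn by (intro member_le_sum) auto
    then show ?thesis using i by simp
  qed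
  have wc: "continuous_on K (w i)" if "i \<in> {..<m}" for i
    using w that continuous_on_subset by blast
  have Sc: "continuous_on K S" unfolding S_def by (intro continuous_on_sum wc)
  have \<phi>c: "continuous_on K \<phi>0" unfolding \<phi>0_def
    by (intro continuous_on_scaleR continuous_on_divide continuous_on_const Sc continuous_on_sum wc)
       (use Spos in force)+
  have bounds: "norm (\<phi>0 x) \<le> R \<and> \<delta>/2 \<le> \<phi>0 x \<bullet> nc (G x)" if x: "x \<in> K" for x
  proof
    have Sx: "S x > 0" using Spos[OF x] .
    have "norm (\<Sum>i<m. w i x *\<^sub>R xi i) \<le> R * S x"
      unfolding S_def using wnn xiR by (intro conv_norm) auto
    then show "norm (\<phi>0 x) \<le> R" unfolding \<phi>0_def using Sx by (simp add: field_simps)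
    have "\<delta>/2 * S x \<le> (\<Sum>i<m. w i x *\<^sub>R xi i) \<bullet> nc (G x)"
      unfolding S_def using wnn Ngood act x by (intro conv_inner) (auto intro: less_imp_le)
    then show "\<delta>/2 \<le> \<phi>0 x \<bullet> nc (G x)" unfolding \<phi>0_def using Sx by (simp add: field_simps)
  qed
  have goodpts: "W (augment (G x) (\<phi>0 x)) \<le> W0 W (G x) + ennreal (3*\<epsilon>1)" if x: "x \<in> K - Bad" for x
  proof -
    obtain k where k: "k < m" "x \<in> C k" using x unfolding Bad_def by auto
    note ik = inC[OF k(2) k(1)]
    have "(\<Sum>i<m. w i x *\<^sub>R xi i) = (\<Sum>i<m. if i = k then w k x *\<^sub>R xi k else 0)"
      using ik by (intro sum.cong) auto
    also have "\<dots> = w k x *\<^sub>R xi k" using k(1) by simp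
    finally have s1: "(\<Sum>i<m. w i x *\<^sub>R xi i) = w k x *\<^sub>R xi k" .
    have "S x = (\<Sum>i<m. if i = k then w k x else 0)"
      unfolding S_def using ik by (intro sum.cong) auto
    also have "\<dots> = w k x" using k(1) by simp
    finally have s2: "S x = w k x" .
    have "\<phi>0 x = xi k" unfolding \<phi>0_def s1 s2 using ik by simp
    then show ?thesis using Ngood[OF k(1)] CP[OF k(1)] k(2) by auto
  qed
  show ?thesis
    by (rule exI[of _ \<phi>0], rule exI[of _ Bad]) (use \<phi>c Bad_borel Bad_meas bounds goodpts in blast)
qed

lemma Wfin_aug: "\<delta> > 0 \<Longrightarrow> \<delta> \<le> \<xi> \<bullet> nc A \<Longrightarrow> W (augment A \<xi>) < top"
  using Wfin[of "augment A \<xi>"] unfolding det_aug infinity_ennreal_def by simp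

lemma poly_step:
  fixes G :: "real^2 \<Rightarrow> real^2^3" and K :: "(real^2) set" and \<phi>0 :: "real^2 \<Rightarrow> real^3"
  assumes K: "compact K" and Gc: "continuous_on K G" and \<phi>c: "continuous_on K \<phi>0"
    and M: "\<forall>x\<in>K. norm (G x) \<le> M" and d: "\<delta> > 0"
    and b: "\<forall>x\<in>K. norm (\<phi>0 x) \<le> R \<and> \<delta>/2 \<le> \<phi>0 x \<bullet> nc (G x)" and e3: "e3 > 0"
  shows "\<exists>g. polynomial_function g \<and> (\<forall>x\<in>K. norm (g x) \<le> R + 1 \<and> \<delta>/4 \<le> g x \<bullet> nc (G x)
          \<and> W (augment (G x) (g x)) \<le> W (augment (G x) (\<phi>0 x)) + ennreal e3)"
proof -
  define Q where "Q = (cball (0::real^2^3) M \<times> cball (0::real^3) (R+1)) \<inter> {z. \<delta>/4 \<le> snd z \<bullet> nc (fst z)}"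
  have cn: "continuous_on UNIV (\<lambda>z::(real^2^3) \<times> (real^3). snd z \<bullet> nc (fst z))"
    by (intro continuous_on_inner continuous_on_snd continuous_on_compose2[OF cont_nc] continuous_on_fst continuous_on_id) auto
  have cQ: "compact Q" unfolding Q_def
    by (intro compact_Int_closed compact_Times compact_cball closed_Collect_le[OF continuous_on_const cn])
  define hQ where "hQ z = enn2real (W (augment (fst z) (snd z)))" for z :: "(real^2^3) \<times> (real^3)"
  have finQ: "W (augment (fst z) (snd z)) < top" if "z \<in> Q" for z
    using that d unfolding Q_def by (intro Wfin_aug[of "\<delta>/4"]) auto
  have hQc: "continuous_on Q hQ"
    unfolding continuous_on_def
  proof
    fix z assume z: "z \<in> Q"
    have "((\<lambda>z. W (augment (fst z) (snd z))) \<longlongrightarrow> W (augment (fst z) (snd z))) (at z within Q)"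
      using continuous_on_subset[OF Waug_cont subset_UNIV] z unfolding continuous_on_def by blast
    then have "((\<lambda>z. W (augment (fst z) (snd z))) \<longlongrightarrow> ennreal (hQ z)) (at z within Q)"
      unfolding hQ_def using finQ[OF z] by simp
    then show "(hQ \<longlongrightarrow> hQ z) (at z within Q)"
      unfolding hQ_def[abs_def] by (rule tendsto_enn2real) (simp add: hQ_def)
  qed
  have "uniformly_continuous_on Q hQ" by (rule compact_uniformly_continuous[OF hQc cQ])
  then obtain dd where dd: "dd > 0" "\<forall>z\<in>Q. \<forall>z'\<in>Q. dist z' z < dd \<longrightarrow> dist (hQ z') (hQ z) < e3"
    unfolding uniformly_continuous_on_def using e3 by metis
  define \<tau> where "\<tau> = min (min 1 dd) (\<delta> / (4 * (M\<^sup>2 + 1)))"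
  have \<tau>: "\<tau> > 0" "\<tau> \<le> 1" "\<tau> \<le> dd" "\<tau> \<le> \<delta> / (4 * (M\<^sup>2 + 1))"
  proof -
    have "0 < M\<^sup>2 + 1" using zero_le_power2[of M] by linarith
    then have "\<delta> / (4 * (M\<^sup>2 + 1)) > 0" using d by simp
    then show "\<tau> > 0" "\<tau> \<le> 1" "\<tau> \<le> dd" "\<tau> \<le> \<delta> / (4 * (M\<^sup>2 + 1))"
      unfolding \<tau>_def using dd by auto
  qed
  obtain g where g: "polynomial_function g" "\<forall>x\<in>K. norm (\<phi>0 x - g x) < \<tau>"
    using Stone_Weierstrass_polynomial_function[OF K \<phi>c \<tau>(1)] by blast
  have "\<forall>x\<in>K. norm (g x) \<le> R + 1 \<and> \<delta>/4 \<le> g x \<bullet> nc (G x)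
          \<and> W (augment (G x) (g x)) \<le> W (augment (G x) (\<phi>0 x)) + ennreal e3"
  proof
    fix x assume x: "x \<in> K"
    have gx: "norm (\<phi>0 x - g x) < \<tau>" using g(2) x by blast
    have bx: "norm (\<phi>0 x) \<le> R" "\<delta>/2 \<le> \<phi>0 x \<bullet> nc (G x)" using b x by auto
    have "norm (g x) \<le> norm (\<phi>0 x) + norm (\<phi>0 x - g x)"
      using norm_triangle_ineq4[of "\<phi>0 x" "\<phi>0 x - g x"] by simp
    then have ng: "norm (g x) \<le> R + 1" using gx \<tau>(2) bx(1) by linarith
    have nG: "norm (G x) \<le> M" using M x by blast
    have nn: "norm (nc (G x)) \<le> M\<^sup>2"
      using norm_nc[of "G x"] nG by (meson norm_ge_zero order_trans power_mono)
    have "\<bar>(\<phi>0 x - g x) \<bullet> nc (G x)\<bar> \<le> norm (\<phi>0 x - g x) * norm (nc (G x))"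
      by (rule Cauchy_Schwarz_ineq2)
    also have "\<dots> \<le> \<tau> * M\<^sup>2" using gx nn \<tau>(1) by (intro mult_mono) auto
    also have "\<dots> \<le> \<delta> / (4 * (M\<^sup>2 + 1)) * M\<^sup>2" using \<tau>(4) by (intro mult_right_mono) auto
    also have "\<dots> \<le> \<delta> / 4"
    proof -
      have "\<delta> / (4 * (M\<^sup>2 + 1)) * M\<^sup>2 = \<delta> / 4 * (M\<^sup>2 / (M\<^sup>2 + 1))" by (simp add: field_simps)
      also have "\<dots> \<le> \<delta> / 4 * 1"
      proof (intro mult_left_mono)
        have "0 < M\<^sup>2 + 1" using zero_le_power2[of M] by linarith
        then show "M\<^sup>2 / (M\<^sup>2 + 1) \<le> 1" by (simp add: divide_le_eq_1)
      qed (use d in auto)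
      finally show ?thesis by simp
    qed
    finally have err: "\<bar>(\<phi>0 x - g x) \<bullet> nc (G x)\<bar> \<le> \<delta> / 4" .
    have ig: "\<delta>/4 \<le> g x \<bullet> nc (G x)"
      using err bx(2) unfolding inner_diff_left abs_le_iff by linarith
    define z where "z = (G x, \<phi>0 x)"
    define z' where "z' = (G x, g x)"
    have zQ: "z \<in> Q" unfolding z_def Q_def using nG bx d by auto
    have z'Q: "z' \<in> Q" unfolding z'_def Q_def using nG ng ig by auto
    have "dist z' z = dist (g x) (\<phi>0 x)" unfolding z_def z'_def by (simp add: dist_Pair_Pair)
    also have "\<dots> < dd" using gx \<tau>(3) by (simp add: dist_norm norm_minus_commute)
    finally have "dist (hQ z') (hQ z) < e3" using dd(2) zQ z'Q by blast
    then have "hQ z' \<le> hQ z + e3" by (simp add: dist_real_def)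
    then have "ennreal (hQ z') \<le> ennreal (hQ z) + ennreal e3"
      using e3 by (simp add: ennreal_plus[symmetric] hQ_def ennreal_leI del: ennreal_plus)
    moreover have "ennreal (hQ z') = W (augment (G x) (g x))" unfolding hQ_def using finQ[OF z'Q] z'_def by simp
    moreover have "ennreal (hQ z) = W (augment (G x) (\<phi>0 x))" unfolding hQ_def using finQ[OF zQ] z_def by simp
    ultimately have "W (augment (G x) (g x)) \<le> W (augment (G x) (\<phi>0 x)) + ennreal e3" by simp
    then show "norm (g x) \<le> R + 1 \<and> \<delta>/4 \<le> g x \<bullet> nc (G x)
          \<and> W (augment (G x) (g x)) \<le> W (augment (G x) (\<phi>0 x)) + ennreal e3" using ng ig by blast
  qed
  then show ?thesis using g(1) by blast
qed

lemma main_inner: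
  "\<forall>\<eta>>0. \<forall>M. \<exists>\<beta>>0. \<forall>(\<Omega>::(real^2) set) (G::real^2 \<Rightarrow> real^2^3).
     open \<Omega> \<and> bounded \<Omega> \<and> uniformly_continuous_on (closure \<Omega>) G
     \<and> (\<forall>x\<in>closure \<Omega>. norm (cross3 (col32 (G x) 1) (col32 (G x) 2)) \<ge> \<eta>)
     \<and> (\<forall>x\<in>closure \<Omega>. norm (G x) \<le> M)
     \<longrightarrow> (\<forall>U. open U \<and> U \<subseteq> \<Omega> \<longrightarrow>
           (\<integral>\<^sup>+x\<in>U. W0 W (G x) \<partial>lborel)
         = (INF \<phi>\<in>{\<phi>. smooth_up_to_boundary \<Omega> \<phi>
                       \<and> (\<forall>x\<in>closure \<Omega>. det (augment (G x) (\<phi> x)) \<ge> 1 / \<beta>)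
                       \<and> (\<forall>x\<in>\<Omega>. norm (\<phi> x) \<le> \<beta>)}.
              \<integral>\<^sup>+x\<in>U. W (augment (G x) (\<phi> x)) \<partial>lborel))"
proof (intro allI impI)
  fix \<eta> :: real and M :: real
  assume \<eta>: "\<eta> > 0"
  obtain L0 where L0: "L0 \<ge> 0" "\<forall>A. norm A \<le> M \<longrightarrow> \<eta> \<le> norm (nc A) \<longrightarrow> W0 W A \<le> ennreal L0"
    using W0_bound[OF \<eta>, of M] by blast
  define R where "R = max 1 ((L0 + 1 + 1/C1)/C1)"
  have R1: "R \<ge> 1" unfolding R_def by simp
  obtain \<delta> where \<delta>: "\<delta> > 0" "\<forall>A \<xi>. norm A \<le> M \<longrightarrow> norm \<xi> \<le> R \<longrightarrow> W (augment A \<xi>) \<le> ennreal (L0+1) \<longrightarrow> \<delta> \<le> \<xi> \<bullet> nc A"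
    using delta_exists[of "L0+1" M R] L0(1) by auto
  define \<beta> where "\<beta> = max (R+1) (4/\<delta>)"
  have \<beta>: "\<beta> > 0" "R + 1 \<le> \<beta>" "1/\<beta> \<le> \<delta>/4"
  proof -
    show "\<beta> > 0" unfolding \<beta>_def using R1 by simp
    show "R + 1 \<le> \<beta>" unfolding \<beta>_def by simp
    have "4/\<delta> \<le> \<beta>" unfolding \<beta>_def by simp
    then show "1/\<beta> \<le> \<delta>/4" using \<delta>(1) \<open>\<beta> > 0\<close> by (simp add: field_simps)
  qed
  show "\<exists>\<beta>>0. \<forall>(\<Omega>::(real^2) set) (G::real^2 \<Rightarrow> real^2^3).
     open \<Omega> \<and> bounded \<Omega> \<and> uniformly_continuous_on (closure \<Omega>) G
     \<and> (\<forall>x\<in>closure \<Omega>. norm (cross3 (col32 (G x) 1) (col32 (G x) 2)) \<ge> \<eta>)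
     \<and> (\<forall>x\<in>closure \<Omega>. norm (G x) \<le> M)
     \<longrightarrow> (\<forall>U. open U \<and> U \<subseteq> \<Omega> \<longrightarrow>
           (\<integral>\<^sup>+x\<in>U. W0 W (G x) \<partial>lborel)
         = (INF \<phi>\<in>{\<phi>. smooth_up_to_boundary \<Omega> \<phi>
                       \<and> (\<forall>x\<in>closure \<Omega>. det (augment (G x) (\<phi> x)) \<ge> 1 / \<beta>)
                       \<and> (\<forall>x\<in>\<Omega>. norm (\<phi> x) \<le> \<beta>)}.
              \<integral>\<^sup>+x\<in>U. W (augment (G x) (\<phi> x)) \<partial>lborel))"
  proof (intro exI[of _ \<beta>] conjI \<beta>(1) allI impI)
    fix \<Omega> :: "(real^2) set" and G :: "real^2 \<Rightarrow> real^2^3" and U :: "(real^2) set"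
    assume H: "open \<Omega> \<and> bounded \<Omega> \<and> uniformly_continuous_on (closure \<Omega>) G
     \<and> (\<forall>x\<in>closure \<Omega>. norm (cross3 (col32 (G x) 1) (col32 (G x) 2)) \<ge> \<eta>)
     \<and> (\<forall>x\<in>closure \<Omega>. norm (G x) \<le> M)"
    assume HU: "open U \<and> U \<subseteq> \<Omega>"
    define K where "K = closure \<Omega>"
    have K: "compact K" unfolding K_def using H by simp
    have Gc: "continuous_on K G" unfolding K_def using H uniformly_continuous_imp_continuous by blast
    have GM: "\<forall>x\<in>K. norm (G x) \<le> M" using H unfolding K_def by blast
    have Gn: "\<forall>x\<in>K. \<eta> \<le> norm (nc (G x))" using H unfolding K_def nc_def by blast
    have UK: "U \<subseteq> K" unfolding K_def using HU closure_subset by blast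
    have \<Omega>K: "\<Omega> \<subseteq> K" unfolding K_def using closure_subset by blast
    have W0L: "\<forall>x\<in>K. W0 W (G x) \<le> ennreal L0" using L0(2) GM Gn by blast
    define \<Phi> where "\<Phi> = {\<phi>. smooth_up_to_boundary \<Omega> \<phi>
                       \<and> (\<forall>x\<in>closure \<Omega>. det (augment (G x) (\<phi> x)) \<ge> 1 / \<beta>)
                       \<and> (\<forall>x\<in>\<Omega>. norm (\<phi> x) \<le> \<beta>)}"
    have le1: "(\<integral>\<^sup>+x\<in>U. W0 W (G x) \<partial>lborel) \<le> (INF \<phi>\<in>\<Phi>. \<integral>\<^sup>+x\<in>U. W (augment (G x) (\<phi> x)) \<partial>lborel)"
    proof (rule INF_greatest)
      fix \<phi> assume "\<phi> \<in> \<Phi>"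
      have "W0 W (G x) \<le> W (augment (G x) (\<phi> x))" for x unfolding W0_def by (rule INF_lower) simp
      then show "(\<integral>\<^sup>+x\<in>U. W0 W (G x) \<partial>lborel) \<le> (\<integral>\<^sup>+x\<in>U. W (augment (G x) (\<phi> x)) \<partial>lborel)"
        by (intro nn_integral_mono mult_right_mono) auto
    qed
    have le2: "(INF \<phi>\<in>\<Phi>. \<integral>\<^sup>+x\<in>U. W (augment (G x) (\<phi> x)) \<partial>lborel) \<le> (\<integral>\<^sup>+x\<in>U. W0 W (G x) \<partial>lborel)"
    proof (rule ennreal_le_epsilon)
      fix e :: real assume e: "e > 0"
      have Ufin: "emeasure lborel U < \<infinity>"
        using H HU by (intro emeasure_bounded_finite) (auto intro: bounded_subset)
      define \<mu> where "\<mu> = measure lborel U"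
      have \<mu>0: "\<mu> \<ge> 0" unfolding \<mu>_def by simp
      have Umeas: "emeasure lborel U = ennreal \<mu>"
        unfolding \<mu>_def using Ufin by (intro emeasure_eq_ennreal_measure) (simp add: infinity_ennreal_def)
      obtain L' where L': "L' \<ge> 0" "\<forall>F. det F \<ge> \<delta>/4 \<longrightarrow> norm F \<le> max 0 M + R + 1 \<longrightarrow> W F \<le> ennreal L'"
        using W_bound[of "\<delta>/4" "max 0 M + R + 1"] \<delta>(1) R1 by auto
      define \<epsilon>1 where "\<epsilon>1 = min 1 (e / (8 * (\<mu> + 1)))"
      define \<epsilon>3 where "\<epsilon>3 = e / (8 * (\<mu> + 1))"
      define \<epsilon>2 where "\<epsilon>2 = e / (2 * (L' + 1))"
      have e1: "0 < \<epsilon>1" "\<epsilon>1 \<le> 1" unfolding \<epsilon>1_def using e \<mu>0 by auto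
      have e3: "\<epsilon>3 > 0" unfolding \<epsilon>3_def using e \<mu>0 by auto
      have e2: "\<epsilon>2 > 0" unfolding \<epsilon>2_def using e L' by auto
      have RD: "\<forall>x\<in>K. \<forall>\<xi>. W (augment (G x) \<xi>) \<le> ennreal (L0+1) \<longrightarrow> norm \<xi> \<le> R \<and> \<delta> \<le> \<xi> \<bullet> nc (G x)"
      proof (intro ballI allI impI)
        fix x \<xi> assume x: "x \<in> K" and W: "W (augment (G x) \<xi>) \<le> ennreal (L0+1)"
        have "norm \<xi> \<le> R" unfolding R_def using coerc[OF W] L0(1) by (simp add: add.assoc)
        then show "norm \<xi> \<le> R \<and> \<delta> \<le> \<xi> \<bullet> nc (G x)" using \<delta>(2) GM x W by blast
      qed
      obtain \<phi>0 Bad where A: "continuous_on K \<phi>0" "Bad \<in> sets borel" "emeasure lborel Bad \<le> ennreal \<epsilon>2"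
        "\<forall>x\<in>K. norm (\<phi>0 x) \<le> R \<and> \<delta>/2 \<le> \<phi>0 x \<bullet> nc (G x)"
        "\<forall>x\<in>K - Bad. W (augment (G x) (\<phi>0 x)) \<le> W0 W (G x) + ennreal (3*\<epsilon>1)"
        using approx[OF K Gc L0(1) W0L \<delta>(1) RD e1 e2] by blast
      obtain g where g: "polynomial_function g" "\<forall>x\<in>K. norm (g x) \<le> R + 1 \<and> \<delta>/4 \<le> g x \<bullet> nc (G x)
          \<and> W (augment (G x) (g x)) \<le> W (augment (G x) (\<phi>0 x)) + ennreal \<epsilon>3"
        using poly_step[OF K Gc A(1) GM \<delta>(1) A(4) e3] by blast
      have g\<Phi>: "g \<in> \<Phi>"
        unfolding \<Phi>_def
      proof (intro CollectI conjI ballI)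
        show "smooth_up_to_boundary \<Omega> g" by (rule pf_smooth[OF g(1)])
        fix x assume "x \<in> closure \<Omega>"
        then have "\<delta>/4 \<le> g x \<bullet> nc (G x)" using g(2) unfolding K_def by blast
        then show "1 / \<beta> \<le> det (augment (G x) (g x))" unfolding det_aug using \<beta>(3) by linarith
      next
        fix x assume "x \<in> \<Omega>"
        then have "norm (g x) \<le> R + 1" using g(2) \<Omega>K by blast
        then show "norm (g x) \<le> \<beta>" using \<beta>(2) by linarith
      qed
      define a where "a = 3*\<epsilon>1 + \<epsilon>3"
      have a0: "a \<ge> 0" unfolding a_def using e1 e3 by simp
      have pw: "W (augment (G x) (g x)) * indicator U x \<le>
          W0 W (G x) * indicator U x + ennreal a * indicator U x + ennreal L' * indicator Bad x" for x
      proof (cases "x \<in> U")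
        case False
        then show ?thesis by simp
      next
        case True
        then have xK: "x \<in> K" using UK by blast
        show ?thesis
        proof (cases "x \<in> Bad")
          case True
          have d4: "\<delta>/4 \<le> det (augment (G x) (g x))" unfolding det_aug using g(2) xK by blast
          have "norm (augment (G x) (g x)) \<le> norm (G x) + norm (g x)" by (rule norm_aug_le)
          also have "\<dots> \<le> max 0 M + R + 1" using GM g(2) xK by fastforce
          finally have "W (augment (G x) (g x)) \<le> ennreal L'" using L'(2) d4 by blast
          then show ?thesis using True \<open>x \<in> U\<close> by (simp add: add_increasing)
        next
          case False
          have "W (augment (G x) (g x)) \<le> W (augment (G x) (\<phi>0 x)) + ennreal \<epsilon>3" using g(2) xK by blast
          also have "\<dots> \<le> (W0 W (G x) + ennreal (3*\<epsilon>1)) + ennreal \<epsilon>3"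
            using A(5) xK False by (intro add_right_mono) blast
          also have "\<dots> = W0 W (G x) + ennreal a"
            unfolding a_def using e1 e3 by (simp add: ennreal_plus add.assoc del: ennreal_plus_if)
          finally show ?thesis using False \<open>x \<in> U\<close> by simp
        qed
      qed
      have Ub: "U \<in> sets lborel" using HU by simp
      have W0meas: "(\<lambda>x. W0 W (G x) * indicator U x) \<in> borel_measurable lborel"
      proof -
        have "continuous_on U (\<lambda>x. W0 W (G x))"
          using continuous_on_compose2[OF W0_cont[of L0] continuous_on_subset[OF Gc UK]] W0L UK by blast
        then have "(\<lambda>x. W0 W (G x)) \<in> borel_measurable (restrict_space borel U)"
          by (rule borel_measurable_continuous_on_restrict)
        moreover have "sets (restrict_space lborel U) = sets (restrict_space borel U)"
          by (simp add: sets_restrict_space)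
        ultimately have "(\<lambda>x. W0 W (G x)) \<in> borel_measurable (restrict_space lborel U)"
          using measurable_cong_sets by blast
        then show ?thesis using Ub by (subst borel_measurable_restrict_space_iff_ennreal[symmetric]) auto
      qed
      have "(INF \<phi>\<in>\<Phi>. \<integral>\<^sup>+x\<in>U. W (augment (G x) (\<phi> x)) \<partial>lborel) \<le> (\<integral>\<^sup>+x\<in>U. W (augment (G x) (g x)) \<partial>lborel)"
        using g\<Phi> by (rule INF_lower)
      also have "\<dots> \<le> (\<integral>\<^sup>+x. W0 W (G x) * indicator U x + ennreal a * indicator U x + ennreal L' * indicator Bad x \<partial>lborel)"
        using pw by (intro nn_integral_mono) auto
      also have "\<dots> = (\<integral>\<^sup>+x\<in>U. W0 W (G x) \<partial>lborel) + (\<integral>\<^sup>+x. ennreal a * indicator U x \<partial>lborel)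
          + (\<integral>\<^sup>+x. ennreal L' * indicator Bad x \<partial>lborel)"
        using W0meas Ub A(2) by (simp add: nn_integral_add)
      also have "\<dots> = (\<integral>\<^sup>+x\<in>U. W0 W (G x) \<partial>lborel) + ennreal a * emeasure lborel U + ennreal L' * emeasure lborel Bad"
        using Ub A(2) by (simp add: nn_integral_cmult_indicator)
      also have "\<dots> \<le> (\<integral>\<^sup>+x\<in>U. W0 W (G x) \<partial>lborel) + ennreal (a * \<mu>) + ennreal (L' * \<epsilon>2)"
      proof -
        have "ennreal a * emeasure lborel U = ennreal (a * \<mu>)" unfolding Umeas using a0 \<mu>0 by (simp add: ennreal_mult)
        moreover have "ennreal L' * emeasure lborel Bad \<le> ennreal (L' * \<epsilon>2)"
          using A(3) L'(1) e2 by (simp add: ennreal_mult mult_left_mono)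
        ultimately show ?thesis by (intro add_mono) auto
      qed
      also have "\<dots> \<le> (\<integral>\<^sup>+x\<in>U. W0 W (G x) \<partial>lborel) + ennreal e"
      proof -
        have "\<epsilon>1 \<le> e/(8*(\<mu>+1))" unfolding \<epsilon>1_def by simp
        then have "a \<le> 4 * (e/(8*(\<mu>+1)))" unfolding a_def \<epsilon>3_def by linarith
        also have "\<dots> = e / (2 * (\<mu> + 1))"
        proof -
          have "\<mu> + 1 \<noteq> 0" using \<mu>0 by linarith
          then show ?thesis by (simp add: field_simps)
        qed
        finally have "a \<le> e / (2 * (\<mu> + 1))" .
        then have "a * \<mu> \<le> e / (2 * (\<mu> + 1)) * \<mu>" using \<mu>0 by (rule mult_right_mono)
        also have "\<dots> \<le> e / 2" using e \<mu>0 by (auto simp: field_simps)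
        finally have 1: "a * \<mu> \<le> e/2" .
        have 2: "L' * \<epsilon>2 \<le> e/2" unfolding \<epsilon>2_def using e L'(1) by (auto simp: field_simps)
        have "ennreal (a * \<mu>) + ennreal (L' * \<epsilon>2) = ennreal (a * \<mu> + L' * \<epsilon>2)"
          using a0 \<mu>0 L'(1) e2 by (simp add: ennreal_plus)
        also have "\<dots> \<le> ennreal e" using 1 2 by (intro ennreal_leI) simp
        finally show ?thesis by (simp add: add.assoc add_left_mono)
      qed
      finally show "(INF \<phi>\<in>\<Phi>. \<integral>\<^sup>+x\<in>U. W (augment (G x) (\<phi> x)) \<partial>lborel) \<le> (\<integral>\<^sup>+x\<in>U. W0 W (G x) \<partial>lborel) + ennreal e" .
    qed
    show "(\<integral>\<^sup>+x\<in>U. W0 W (G x) \<partial>lborel) = (INF \<phi>\<in>\<Phi>. \<integral>\<^sup>+x\<in>U. W (augment (G x) (\<phi> x)) \<partial>lborel)"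
      using le1 le2 by (rule antisym)
  qed
qed

end

theorem lemma4p9:
  fixes p :: real and W :: "real^3^3 \<Rightarrow> ennreal"
  assumes "1 < p" and "hyp_W p W"
  shows "\<forall>\<eta>>0. \<forall>M. \<exists>\<beta>>0. \<forall>(\<Omega>::(real^2) set) (G::real^2 \<Rightarrow> real^2^3).
     open \<Omega> \<and> bounded \<Omega> \<and> uniformly_continuous_on (closure \<Omega>) G
     \<and> (\<forall>x\<in>closure \<Omega>. norm (cross3 (col32 (G x) 1) (col32 (G x) 2)) \<ge> \<eta>)
     \<and> (\<forall>x\<in>closure \<Omega>. norm (G x) \<le> M)
     \<longrightarrow> (\<forall>U. open U \<and> U \<subseteq> \<Omega> \<longrightarrow>
           (\<integral>\<^sup>+x\<in>U. W0 W (G x) \<partial>lborel)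
         = (INF \<phi>\<in>{\<phi>. smooth_up_to_boundary \<Omega> \<phi>
                       \<and> (\<forall>x\<in>closure \<Omega>. det (augment (G x) (\<phi> x)) \<ge> 1 / \<beta>)
                       \<and> (\<forall>x\<in>\<Omega>. norm (\<phi> x) \<le> \<beta>)}.
              \<integral>\<^sup>+x\<in>U. W (augment (G x) (\<phi> x)) \<partial>lborel))"
proof -
  from assms(2) have Wc: "continuous_on UNIV W"
    and Wp: "\<forall>F. det F > 0 \<longrightarrow> W F < \<infinity>"
    and Wn: "\<forall>F. det F \<le> 0 \<longrightarrow> W F = \<infinity>"
    and Wl: "\<exists>C1>0. \<forall>F. ennreal (C1 * norm F powr p - 1 / C1) \<le> W F"
    and Wu: "\<forall>\<delta>>0. \<exists>c. \<forall>F. det F \<ge> \<delta> \<longrightarrow> W F \<le> ennreal (c * (1 + norm F powr p))"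
    unfolding hyp_W_def by blast+
  obtain C1 where C1: "C1 > 0" "\<forall>F. ennreal (C1 * norm F powr p - 1 / C1) \<le> W F" using Wl by blast
  show ?thesis
    by (rule main_inner[of W C1 p]) (use Wc C1 assms(1) Wp Wn Wu in auto)
qed

end
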